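(* Let $(M,I,J,K)$ be a hypercomplex manifold of complex dimension $2n$ (with respect to $I$), and let $\alpha$ be a nonnegative real $(1,1)$-form on $M$. Then \[ \big(\alpha-\alpha(\cdot J,\cdot J)\big)^{2n}\ \ge\ \alpha^{2n} \] as top-degree forms (i.e. the difference is a nonnegative multiple of the volume form for the orientation induced by $I$).
   Context: A hypercomplex manifold $(M,I,J,K)$ is a manifold with three integrable complex structures satisfying $IJK=-\mathrm{id}_{TM}$; endomorphisms act on tangent vectors from the right (written $XJ$). Types $(p,q)$ are with respect to $I$. A real $(1,1)$-form $\alpha$ is nonnegative if $\alpha(Z,\bar Z)\ge0$ in the usual sense of positivity of real $(1,1)$-forms (equivalently $-\sqrt{-1}\,\alpha(Z,\bar Z)\ge 0$ under the standard convention, i.e. $\alpha$ is a semipositive $(1,1)$-form) for all $(1,0)$-vectors $Z$. The form $\alpha(\cdot J,\cdot J)$ denotes $(X,Y)\mapsto\alpha(XJ,YJ)$. *)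

theory Defs
  imports "HOL-Analysis.Analysis" "HOL-Combinatorics.Permutations"
begin

text \<open>Pointwise (linear-algebra) setting: a tangent space is modelled by a finite-dimensional
real vector space 'v. Endomorphisms acting from the right, X J, are written as J X;
thus (X I) J = J (I X).\<close>

text \<open>A hypercomplex structure on a real vector space: three complex structures with IJK = -id
(right action: X I J K = - X, i.e. K (J (I X)) = - X).\<close>
definition hypercomplex_structure :: "('v::real_vector \<Rightarrow> 'v) \<Rightarrow> ('v \<Rightarrow> 'v) \<Rightarrow> ('v \<Rightarrow> 'v) \<Rightarrow> bool" where
  "hypercomplex_structure I J K \<longleftrightarrow>
     linear I \<and> linear J \<and> linear K \<and>
     (\<forall>x. I (I x) = - x) \<and> (\<forall>x. J (J x) = - x) \<and> (\<forall>x. K (K x) = - x) \<and>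
     (\<forall>x. K (J (I x)) = - x)"

definition two_form :: "('v::real_vector \<Rightarrow> 'v \<Rightarrow> real) \<Rightarrow> bool" where
  "two_form \<alpha> \<longleftrightarrow> bilinear \<alpha> \<and> (\<forall>x y. \<alpha> y x = - \<alpha> x y)"

definition real_11_form :: "('v::real_vector \<Rightarrow> 'v) \<Rightarrow> ('v \<Rightarrow> 'v \<Rightarrow> real) \<Rightarrow> bool" where
  "real_11_form I \<alpha> \<longleftrightarrow> two_form \<alpha> \<and> (\<forall>x y. \<alpha> (I x) (I y) = \<alpha> x y)"

text \<open>Nonnegativity: for Z = X - i XI of type (1,0), -i alpha(Z, conj Z) = 2 alpha(X, XI).\<close>
definition nonneg_11_form :: "('v::real_vector \<Rightarrow> 'v) \<Rightarrow> ('v \<Rightarrow> 'v \<Rightarrow> real) \<Rightarrow> bool" where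
  "nonneg_11_form I \<alpha> \<longleftrightarrow> real_11_form I \<alpha> \<and> (\<forall>x. \<alpha> x (I x) \<ge> 0)"

text \<open>The m-th wedge power of a 2-form, evaluated on the vectors v 0, ..., v (2m-1):
  alpha^m (v_0,...,v_{2m-1}) = (1/2^m) sum over sigma in S_{2m} of sgn(sigma) prod_i alpha(v_{sigma(2i)}, v_{sigma(2i+1)})
  (standard convention (a wedge b) = (k+l)!/(k! l!) Alt(a tensor b)).\<close>
definition wedge_pow :: "('v \<Rightarrow> 'v \<Rightarrow> real) \<Rightarrow> nat \<Rightarrow> (nat \<Rightarrow> 'v) \<Rightarrow> real" where
  "wedge_pow \<alpha> m v =
     (\<Sum>\<sigma>\<in>{\<sigma>. \<sigma> permutes {..<2*m}}.
        of_int (sign \<sigma>) * (\<Prod>i<m. \<alpha> (v (\<sigma> (2*i))) (v (\<sigma> (2*i+1))))) / 2 ^ m"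

text \<open>The real frame (v_0, v_0 I, v_1, v_1 I, ...) built from vectors v_j; for C-linearly
independent v_0..v_{N-1} these are exactly the positively oriented real bases for the
orientation induced by I (and for dependent ones every top form vanishes on them).\<close>
definition complex_frame :: "('v \<Rightarrow> 'v) \<Rightarrow> (nat \<Rightarrow> 'v) \<Rightarrow> nat \<Rightarrow> 'v" where
  "complex_frame I v k = (if even k then v (k div 2) else I (v (k div 2)))"

text \<open>Comparison of top-degree forms w.r.t. the orientation induced by I:
  omega \<ge> eta iff omega - eta is a nonnegative multiple of a positive volume form,
  i.e. omega - eta is nonnegative on every I-complex frame.\<close>
definition top_form_ge :: "('v \<Rightarrow> 'v) \<Rightarrow> ((nat \<Rightarrow> 'v) \<Rightarrow> real) \<Rightarrow> ((nat \<Rightarrow> 'v) \<Rightarrow> real) \<Rightarrow> bool" where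
  "top_form_ge I \<omega> \<eta> \<longleftrightarrow> (\<forall>v. \<omega> (complex_frame I v) - \<eta> (complex_frame I v) \<ge> 0)"

end

theory Submission
  imports Defs
begin


abbreviation tr :: "nat \<Rightarrow> nat \<Rightarrow> nat \<Rightarrow> nat" where "tr \<equiv> Transposition.transpose"

definition wt :: "('v \<Rightarrow> 'v \<Rightarrow> real) \<Rightarrow> nat \<Rightarrow> (nat \<Rightarrow> 'v) \<Rightarrow> (nat \<Rightarrow> nat) \<Rightarrow> real" where
  "wt \<omega> m u \<sigma> = of_int (sign \<sigma>) * (\<Prod>i<m. \<omega> (u (\<sigma> (2*i))) (u (\<sigma> (2*i+1))))"

lemma wedge_pow_wt: "wedge_pow \<omega> m u = (\<Sum>\<sigma>\<in>{\<sigma>. \<sigma> permutes {..<2*m}}. wt \<omega> m u \<sigma>) / 2 ^ m"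
  unfolding wedge_pow_def wt_def by simp

lemma prod_lin:
  fixes F :: "'a \<Rightarrow> nat \<Rightarrow> real"
  assumes "i0 \<in> A" "finite A"
    and "\<And>i z z'. i \<in> A \<Longrightarrow> i \<noteq> i0 \<Longrightarrow> F z i = F z' i"
  shows "prod (F z) A = F z i0 * prod (F z0) (A - {i0})"
proof -
  have "prod (F z) A = F z i0 * prod (F z) (A - {i0})"
    using assms by (simp add: prod.remove)
  also have "prod (F z) (A - {i0}) = prod (F z0) (A - {i0})"
    using assms(3) by (intro prod.cong) auto
  finally show ?thesis .
qed

lemma wt_lin:
  assumes bl: "bilinear \<omega>" and \<sigma>: "\<sigma> permutes {..<2*m}" and k: "k < 2*m"
  shows "wt \<omega> m (u(k := x + c *\<^sub>R y)) \<sigma> = wt \<omega> m (u(k := x)) \<sigma> + c * wt \<omega> m (u(k := y)) \<sigma>"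
proof -
  define p where "p = inv \<sigma> k"
  have sp: "\<sigma> p = k" unfolding p_def using \<sigma> by (meson permutes_inverses(1))
  have pl: "p < 2*m" unfolding p_def using \<sigma> k
    by (metis lessThan_iff permutes_inv permutes_in_image)
  define i0 where "i0 = p div 2"
  have i0: "i0 \<in> {..<m}" using pl unfolding i0_def by auto
  have inj: "\<And>a b. \<sigma> a = \<sigma> b \<Longrightarrow> a = b" using \<sigma> by (metis permutes_inj injD)
  define G where "G = (\<lambda>z i. \<omega> ((u(k := z)) (\<sigma> (2*i))) ((u(k := z)) (\<sigma> (2*i+1))))"
  have oth: "G z i = G z' i" if "i \<in> {..<m}" "i \<noteq> i0" for i z z'
  proof -
    have "2*i \<noteq> p" "2*i+1 \<noteq> p" using that unfolding i0_def by auto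
    then have "\<sigma> (2*i) \<noteq> k" "\<sigma> (2*i+1) \<noteq> k" using inj sp by metis+
    then show ?thesis unfolding G_def by simp
  qed
  have G0: "G (x + c *\<^sub>R y) i0 = G x i0 + c * G y i0"
  proof (cases "even p")
    case True
    then have "2*i0 = p" unfolding i0_def by simp
    moreover then have "\<sigma> (2*i0+1) \<noteq> k" using inj sp by (metis n_not_Suc_n add.commute plus_1_eq_Suc)
    ultimately show ?thesis unfolding G_def using sp
      by (simp add: bilinear_ladd[OF bl] bilinear_lmul[OF bl])
  next
    case False
    then have "2*i0+1 = p" unfolding i0_def by simp
    moreover then have "\<sigma> (2*i0) \<noteq> k" using inj sp by (metis n_not_Suc_n add.commute plus_1_eq_Suc)
    ultimately show ?thesis unfolding G_def using sp
      by (simp add: bilinear_radd[OF bl] bilinear_rmul[OF bl])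
  qed
  have "\<And>z. wt \<omega> m (u(k := z)) \<sigma> = of_int (sign \<sigma>) * (G z i0 * prod (G x) ({..<m} - {i0}))"
    unfolding wt_def using prod_lin[of i0 "{..<m}" G _ x, OF i0 _ oth] by (simp add: G_def)
  then show ?thesis using G0 by (simp add: algebra_simps)
qed

lemma wedge_lin:
  assumes bl: "bilinear \<omega>" and k: "k < 2*m"
  shows "wedge_pow \<omega> m (u(k := x + c *\<^sub>R y)) = wedge_pow \<omega> m (u(k := x)) + c * wedge_pow \<omega> m (u(k := y))"
  unfolding wedge_pow_wt using wt_lin[OF bl _ k]
  by (simp add: sum.distrib sum_distrib_left add_divide_distrib)

lemma wedge_alt:
  assumes jk: "j \<noteq> k" "j < 2*m" "k < 2*m" and eq: "u j = u k"
  shows "wedge_pow \<omega> m u = 0"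
proof -
  let ?T = "{\<sigma>. \<sigma> permutes {..<2*m}}"
  have tp: "tr j k permutes {..<2*m}" using jk by (simp add: permutes_swap_id)
  have ut: "u (tr j k x) = u x" for x using eq by (simp add: Transposition.transpose_def)
  have "(\<Sum>\<sigma>\<in>?T. wt \<omega> m u \<sigma>) = (\<Sum>\<sigma>\<in>?T. wt \<omega> m u (tr j k \<circ> \<sigma>))"
    by (rule setum_permutations_compose_left[OF tp])
  also have "\<dots> = (\<Sum>\<sigma>\<in>?T. - wt \<omega> m u \<sigma>)"
  proof (rule sum.cong[OF refl])
    fix \<sigma> assume "\<sigma> \<in> ?T"
    then have "permutation \<sigma>" using permutation_permutes by blast
    then have "sign (tr j k \<circ> \<sigma>) = - sign \<sigma>"
      using jk by (simp add: sign_compose permutation_swap_id sign_swap_id)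
    then show "wt \<omega> m u (tr j k \<circ> \<sigma>) = - wt \<omega> m u \<sigma>" unfolding wt_def by (simp add: ut)
  qed
  finally have "(\<Sum>\<sigma>\<in>?T. wt \<omega> m u \<sigma>) = 0" by (simp add: sum_negf)
  then show ?thesis unfolding wedge_pow_wt by simp
qed

lemma wedge_local:
  assumes "\<And>j. j < 2*m \<Longrightarrow> u j = u' j"
  shows "wedge_pow \<omega> m u = wedge_pow \<omega> m u'"
proof -
  have "wt \<omega> m u \<sigma> = wt \<omega> m u' \<sigma>" if "\<sigma> permutes {..<2*m}" for \<sigma>
  proof -
    have "\<sigma> a < 2*m" if "a < 2*m" for a using permutes_in_image[OF \<open>\<sigma> permutes _\<close>] that by auto
    then show ?thesis unfolding wt_def using assms by (intro arg_cong2[where f="(*)"] refl prod.cong) auto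
  qed
  then show ?thesis unfolding wedge_pow_wt by (intro arg_cong2[where f="(/)"] sum.cong) auto
qed




lemma wedge_fc:
  assumes bl: "bilinear \<omega>" and fin: "finite S" and S: "S \<subseteq> {..<2*m}"
  shows "wedge_pow \<omega> (Suc m) (\<lambda>j. if j \<in> S then u j + c j *\<^sub>R u (2*m) + d j *\<^sub>R u (Suc (2*m)) else u j)
       = wedge_pow \<omega> (Suc m) u"
  using fin S
proof (induction S rule: finite_induct)
  case empty
  then show ?case by simp
next
  case (insert k S)
  define uS where "uS = (\<lambda>j. if j \<in> S then u j + c j *\<^sub>R u (2*m) + d j *\<^sub>R u (Suc (2*m)) else u j)"
  have k: "k < 2*m" "k \<notin> S" "2*m \<notin> S" "Suc (2*m) \<notin> S" using insert by auto
  have k2: "k < 2 * Suc m" using k by simp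
  have e: "(\<lambda>j. if j \<in> insert k S then u j + c j *\<^sub>R u (2*m) + d j *\<^sub>R u (Suc (2*m)) else u j)
     = uS(k := (uS k + c k *\<^sub>R u (2*m)) + d k *\<^sub>R u (Suc (2*m)))"
    unfolding uS_def using k by (auto simp: fun_eq_iff)
  have z1: "wedge_pow \<omega> (Suc m) (uS(k := u (2*m))) = 0"
    by (rule wedge_alt[of k "2*m"]) (use k in \<open>auto simp: uS_def\<close>)
  have z2: "wedge_pow \<omega> (Suc m) (uS(k := u (Suc (2*m)))) = 0"
    by (rule wedge_alt[of k "Suc (2*m)"]) (use k in \<open>auto simp: uS_def\<close>)
  have "wedge_pow \<omega> (Suc m) (uS(k := (uS k + c k *\<^sub>R u (2*m)) + d k *\<^sub>R u (Suc (2*m))))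
      = wedge_pow \<omega> (Suc m) uS"
    using wedge_lin[OF bl k2, of uS] z1 z2 by simp
  also have "\<dots> = wedge_pow \<omega> (Suc m) u" unfolding uS_def using insert by simp
  finally show ?case using e by simp
qed




definition rho :: "nat \<Rightarrow> nat \<Rightarrow> nat \<Rightarrow> nat" where
  "rho m i = tr (2*i) (2*m) \<circ> tr (Suc (2*i)) (Suc (2*m))"

lemma rho_perm: "i \<le> m \<Longrightarrow> rho m i permutes {..<2 * Suc m}"
  unfolding rho_def by (intro permutes_compose permutes_swap_id) auto

lemma rho_even: "i \<le> m \<Longrightarrow> i' \<le> m \<Longrightarrow> rho m i (2*i') = 2 * tr i m i'"
  unfolding rho_def by (simp add: Transposition.transpose_def)

lemma rho_odd: "i \<le> m \<Longrightarrow> i' \<le> m \<Longrightarrow> rho m i (Suc (2*i')) = Suc (2 * tr i m i')"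
  unfolding rho_def by (simp add: Transposition.transpose_def)

lemma rho_sign: "i \<le> m \<Longrightarrow> sign (rho m i) = 1"
  unfolding rho_def by (simp add: sign_compose permutation_swap_id sign_swap_id)

lemma wt_rho:
  assumes \<sigma>: "\<sigma> permutes {..<2 * Suc m}" and i: "i \<le> m"
  shows "wt \<omega> (Suc m) u (\<sigma> \<circ> rho m i) = wt \<omega> (Suc m) u \<sigma>"
proof -
  have "permutation \<sigma>" using \<sigma> permutation_permutes by blast
  then have s: "sign (\<sigma> \<circ> rho m i) = sign \<sigma>"
    using i sign_compose[OF _ permutes_imp_permutation[OF _ rho_perm[OF i]]] rho_sign[OF i] by simp
  have tp: "tr i m permutes {..<Suc m}" using i by (intro permutes_swap_id) auto
  let ?h = "\<lambda>i'. \<omega> (u (\<sigma> (2*i'))) (u (\<sigma> (2*i'+1)))"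
  have "(\<Prod>i'<Suc m. \<omega> (u ((\<sigma> \<circ> rho m i) (2*i'))) (u ((\<sigma> \<circ> rho m i) (2*i'+1))))
      = (\<Prod>i'<Suc m. (?h \<circ> tr i m) i')"
    using i by (intro prod.cong refl) (simp add: rho_even rho_odd)
  also have "\<dots> = (\<Prod>i'<Suc m. ?h i')" using prod.permute[OF tp, of ?h] by simp
  finally show ?thesis unfolding wt_def s by simp
qed

lemma wt_sw:
  assumes \<sigma>: "\<sigma> permutes {..<2 * Suc m}" and anti: "\<forall>x y. \<omega> y x = - \<omega> x y"
  shows "wt \<omega> (Suc m) u (\<sigma> \<circ> tr (2*m) (Suc (2*m))) = wt \<omega> (Suc m) u \<sigma>"
proof -
  have "permutation \<sigma>" using \<sigma> permutation_permutes by blast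
  then have s: "sign (\<sigma> \<circ> tr (2*m) (Suc (2*m))) = - sign \<sigma>"
    using sign_compose[OF _ permutation_swap_id, of \<sigma> "2*m" "Suc (2*m)"] sign_swap_id[of "2*m" "Suc (2*m)"] by simp
  have "(\<Prod>i'<m. \<omega> (u ((\<sigma> \<circ> tr (2*m) (Suc (2*m))) (2*i'))) (u ((\<sigma> \<circ> tr (2*m) (Suc (2*m))) (2*i'+1))))
      = (\<Prod>i'<m. \<omega> (u (\<sigma> (2*i'))) (u (\<sigma> (2*i'+1))))"
  proof (intro prod.cong refl)
    fix i' assume "i' \<in> {..<m}"
    then have "tr (2*m) (Suc (2*m)) (2*i') = 2*i'" "tr (2*m) (Suc (2*m)) (2*i'+1) = 2*i'+1"
      by (simp_all add: Transposition.transpose_def)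
    then show "\<omega> (u ((\<sigma> \<circ> tr (2*m) (Suc (2*m))) (2*i'))) (u ((\<sigma> \<circ> tr (2*m) (Suc (2*m))) (2*i'+1)))
      = \<omega> (u (\<sigma> (2*i'))) (u (\<sigma> (2*i'+1)))" by simp
  qed
  moreover have "\<omega> (u ((\<sigma> \<circ> tr (2*m) (Suc (2*m))) (2*m))) (u ((\<sigma> \<circ> tr (2*m) (Suc (2*m))) (2*m+1)))
     = - \<omega> (u (\<sigma> (2*m))) (u (\<sigma> (2*m+1)))"
  proof -
    have "tr (2*m) (Suc (2*m)) (2*m) = Suc (2*m)" "tr (2*m) (Suc (2*m)) (2*m+1) = 2*m"
      by (simp_all add: Transposition.transpose_def)
    then show ?thesis using anti[rule_format, of "u (\<sigma> (2*m))" "u (\<sigma> (2*m+1))"] by simp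
  qed
  ultimately show ?thesis unfolding wt_def s by simp
qed




lemma sne: "Suc (2*a) \<noteq> 2*(b::nat)" "2*b \<noteq> Suc (2*a)" by presburger+

lemma wt_decomp:
  assumes \<sigma>: "\<sigma> permutes {..<2 * Suc m}" and anti: "\<forall>x y. \<omega> y x = - \<omega> x y"
    and orth: "\<forall>j<2*m. \<omega> (u (2*m)) (u j) = 0 \<and> \<omega> (u (Suc (2*m))) (u j) = 0"
    and g_def: "g = (\<lambda>\<tau>. if \<tau> (2*m) = 2*m \<and> \<tau> (Suc (2*m)) = Suc (2*m) then wt \<omega> (Suc m) u \<tau> else 0)"
  shows "wt \<omega> (Suc m) u \<sigma> = (\<Sum>i<Suc m. g (\<sigma> \<circ> rho m i) + g (\<sigma> \<circ> rho m i \<circ> tr (2*m) (Suc (2*m))))"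
proof -
  let ?sw = "tr (2*m) (Suc (2*m))"
  define p where "p = inv \<sigma> (2*m)"
  have sp: "\<sigma> p = 2*m" unfolding p_def using \<sigma> by (meson permutes_inverses(1))
  have pl: "p < 2 * Suc m" unfolding p_def using \<sigma>
    by (metis lessThan_iff permutes_inv permutes_in_image lessI mult_Suc_right add_2_eq_Suc less_SucI)
  have inj: "\<And>a b. \<sigma> a = \<sigma> b \<Longrightarrow> a = b" using \<sigma> by (metis permutes_inj injD)
  have img: "\<And>a. a < 2 * Suc m \<Longrightarrow> \<sigma> a < 2 * Suc m" using permutes_in_image[OF \<sigma>] by auto
  define i0 where "i0 = p div 2"
  have i0: "i0 < Suc m" using pl unfolding i0_def by auto
  have v1: "(\<sigma> \<circ> rho m i) (2*m) = \<sigma> (2*i)" "(\<sigma> \<circ> rho m i) (Suc (2*m)) = \<sigma> (Suc (2*i))"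
    "(\<sigma> \<circ> rho m i \<circ> ?sw) (2*m) = \<sigma> (Suc (2*i))" "(\<sigma> \<circ> rho m i \<circ> ?sw) (Suc (2*m)) = \<sigma> (2*i)"
    if "i < Suc m" for i
    using that by (simp_all add: rho_def Transposition.transpose_def sne)
  have z: "g (\<sigma> \<circ> rho m i) + g (\<sigma> \<circ> rho m i \<circ> ?sw) = 0" if "i < Suc m" "i \<noteq> i0" for i
  proof -
    have "\<sigma> (2*i) \<noteq> 2*m"
    proof
      assume "\<sigma> (2*i) = 2*m"
      then have "2*i = p" using sp inj by metis
      then show False using that unfolding i0_def by auto
    qed
    moreover have "\<sigma> (Suc (2*i)) \<noteq> 2*m"
    proof
      assume "\<sigma> (Suc (2*i)) = 2*m"
      then have "Suc (2*i) = p" using sp inj by metis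
      then show False using that unfolding i0_def by auto
    qed
    ultimately show ?thesis unfolding g_def using v1[OF that(1)] by simp
  qed
  have "(\<Sum>i<Suc m. g (\<sigma> \<circ> rho m i) + g (\<sigma> \<circ> rho m i \<circ> ?sw))
      = g (\<sigma> \<circ> rho m i0) + g (\<sigma> \<circ> rho m i0 \<circ> ?sw)"
    using i0 z by (subst sum.remove[of _ i0]) (auto intro!: sum.neutral)
  also have "\<dots> = wt \<omega> (Suc m) u \<sigma>"
  proof (cases "even p")
    case True
    then have p2: "2*i0 = p" unfolding i0_def by simp
    have a: "g (\<sigma> \<circ> rho m i0 \<circ> ?sw) = 0"
      using v1[OF i0] p2 sp inj unfolding g_def by (metis n_not_Suc_n)
    show ?thesis
    proof (cases "\<sigma> (Suc p) = Suc (2*m)")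
      case True
      then have "g (\<sigma> \<circ> rho m i0) = wt \<omega> (Suc m) u (\<sigma> \<circ> rho m i0)"
        unfolding g_def using v1[OF i0] p2 sp by simp
      then show ?thesis using a wt_rho[OF \<sigma>, of i0] i0 by simp
    next
      case False
      then have "g (\<sigma> \<circ> rho m i0) = 0" unfolding g_def using v1[OF i0] p2 by simp
      moreover have "wt \<omega> (Suc m) u \<sigma> = 0"
      proof -
        define q where "q = \<sigma> (Suc p)"
        have "Suc p < 2 * Suc m" using pl True by presburger
        then have "q < 2 * Suc m" unfolding q_def using img by blast
        moreover have "q \<noteq> 2*m" unfolding q_def using sp inj by (metis n_not_Suc_n)
        ultimately have "q < 2*m" using False unfolding q_def by presburger
        then have "\<omega> (u (\<sigma> (2*i0))) (u (\<sigma> (2*i0+1))) = 0" using orth p2 sp unfolding q_def by simp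
        then have "(\<Prod>i<Suc m. \<omega> (u (\<sigma> (2*i))) (u (\<sigma> (2*i+1)))) = 0"
          using i0 by (intro prod_zero) auto
        then show ?thesis unfolding wt_def by simp
      qed
      ultimately show ?thesis using a by simp
    qed
  next
    case False
    then have p2: "Suc (2*i0) = p" unfolding i0_def by presburger
    have a: "g (\<sigma> \<circ> rho m i0) = 0"
      using v1[OF i0] p2 sp inj unfolding g_def by (metis n_not_Suc_n)
    show ?thesis
    proof (cases "\<sigma> (2*i0) = Suc (2*m)")
      case True
      then have "g (\<sigma> \<circ> rho m i0 \<circ> ?sw) = wt \<omega> (Suc m) u (\<sigma> \<circ> rho m i0 \<circ> ?sw)"
        unfolding g_def using v1[OF i0] p2 sp by simp
      moreover have "wt \<omega> (Suc m) u (\<sigma> \<circ> rho m i0 \<circ> ?sw) = wt \<omega> (Suc m) u (\<sigma> \<circ> rho m i0)"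
        using wt_sw[OF permutes_compose[OF rho_perm \<sigma>] anti] i0 by simp
      ultimately show ?thesis using a wt_rho[OF \<sigma>, of i0] i0 by simp
    next
      case False
      then have "g (\<sigma> \<circ> rho m i0 \<circ> ?sw) = 0" unfolding g_def using v1[OF i0] by simp
      moreover have "wt \<omega> (Suc m) u \<sigma> = 0"
      proof -
        define q where "q = \<sigma> (2*i0)"
        have "2*i0 < 2 * Suc m" using i0 by simp
        then have "q < 2 * Suc m" unfolding q_def using img by blast
        moreover have "q \<noteq> 2*m" unfolding q_def using sp inj p2 by (metis n_not_Suc_n)
        ultimately have "q < 2*m" using False unfolding q_def by presburger
        then have "\<omega> (u (2*m)) (u (\<sigma> (2*i0))) = 0" using orth unfolding q_def by simp
        then have "\<omega> (u (\<sigma> (2*i0))) (u (\<sigma> (2*i0+1))) = 0"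
          using anti[rule_format, of "u (2*m)" "u (\<sigma> (2*i0))"] p2 sp by simp
        then have "(\<Prod>i<Suc m. \<omega> (u (\<sigma> (2*i))) (u (\<sigma> (2*i+1)))) = 0"
          using i0 by (intro prod_zero) auto
        then show ?thesis unfolding wt_def by simp
      qed
      ultimately show ?thesis using a by simp
    qed
  qed
  finally show ?thesis ..
qed




lemma perm_fix_iff:
  "(\<sigma> permutes {..<2 * Suc m} \<and> \<sigma> (2*m) = 2*m \<and> \<sigma> (Suc (2*m)) = Suc (2*m)) \<longleftrightarrow> \<sigma> permutes {..<2*m}"
proof
  assume a: "\<sigma> permutes {..<2 * Suc m} \<and> \<sigma> (2*m) = 2*m \<and> \<sigma> (Suc (2*m)) = Suc (2*m)"
  have "\<sigma> x = x" if "x \<notin> {..<2*m}" for x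
  proof -
    have "x = 2*m \<or> x = Suc (2*m) \<or> x \<notin> {..<2 * Suc m}" using that by auto
    then show ?thesis using a permutes_not_in by metis
  qed
  then show "\<sigma> permutes {..<2*m}" using a unfolding permutes_def by blast
next
  assume a: "\<sigma> permutes {..<2*m}"
  then show "\<sigma> permutes {..<2 * Suc m} \<and> \<sigma> (2*m) = 2*m \<and> \<sigma> (Suc (2*m)) = Suc (2*m)"
    by (auto intro: permutes_subset permutes_not_in)
qed

lemma wedge_fa:
  assumes anti: "\<forall>x y. \<omega> y x = - \<omega> x y"
    and orth: "\<forall>j<2*m. \<omega> (u (2*m)) (u j) = 0 \<and> \<omega> (u (Suc (2*m))) (u j) = 0"
  shows "wedge_pow \<omega> (Suc m) u = real (Suc m) * \<omega> (u (2*m)) (u (Suc (2*m))) * wedge_pow \<omega> m u"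
proof -
  let ?T = "{\<sigma>. \<sigma> permutes {..<2 * Suc m}}"
  let ?T' = "{\<sigma>. \<sigma> permutes {..<2 * m}}"
  let ?sw = "tr (2*m) (Suc (2*m))"
  define g where "g = (\<lambda>\<tau>. if \<tau> (2*m) = 2*m \<and> \<tau> (Suc (2*m)) = Suc (2*m) then wt \<omega> (Suc m) u \<tau> else 0)"
  have fin: "finite ?T" by (simp add: finite_permutations)
  have sg: "(\<Sum>\<sigma>\<in>?T. g (\<sigma> \<circ> \<pi>)) = (\<Sum>\<sigma>\<in>?T. g \<sigma>)" if "\<pi> permutes {..<2 * Suc m}" for \<pi>
    using sum_permutations_compose_right[OF that, of g] by simp
  have swp: "?sw permutes {..<2 * Suc m}" by (intro permutes_swap_id) auto
  have "(\<Sum>\<sigma>\<in>?T. wt \<omega> (Suc m) u \<sigma>)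
      = (\<Sum>\<sigma>\<in>?T. \<Sum>i<Suc m. g (\<sigma> \<circ> rho m i) + g (\<sigma> \<circ> (rho m i \<circ> ?sw)))"
    using wt_decomp[OF _ anti orth g_def] by (intro sum.cong refl) (simp add: o_assoc)
  also have "\<dots> = (\<Sum>i<Suc m. (\<Sum>\<sigma>\<in>?T. g (\<sigma> \<circ> rho m i)) + (\<Sum>\<sigma>\<in>?T. g (\<sigma> \<circ> (rho m i \<circ> ?sw))))"
    by (subst sum.swap) (simp add: sum.distrib)
  also have "\<dots> = (\<Sum>i<Suc m. 2 * (\<Sum>\<sigma>\<in>?T. g \<sigma>))"
  proof (intro sum.cong refl)
    fix i assume "i \<in> {..<Suc m}"
    then have r: "rho m i permutes {..<2 * Suc m}" by (intro rho_perm) auto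
    show "(\<Sum>\<sigma>\<in>?T. g (\<sigma> \<circ> rho m i)) + (\<Sum>\<sigma>\<in>?T. g (\<sigma> \<circ> (rho m i \<circ> ?sw))) = 2 * (\<Sum>\<sigma>\<in>?T. g \<sigma>)"
      using sg[OF r] sg[OF permutes_compose[OF swp r]] by simp
  qed
  also have "\<dots> = 2 * real (Suc m) * (\<Sum>\<sigma>\<in>?T. g \<sigma>)" by simp
  finally have e1: "(\<Sum>\<sigma>\<in>?T. wt \<omega> (Suc m) u \<sigma>) = 2 * real (Suc m) * (\<Sum>\<sigma>\<in>?T. g \<sigma>)" .
  have "(\<Sum>\<sigma>\<in>?T. g \<sigma>) = (\<Sum>\<sigma>\<in>{\<sigma>\<in>?T. \<sigma> (2*m) = 2*m \<and> \<sigma> (Suc (2*m)) = Suc (2*m)}. wt \<omega> (Suc m) u \<sigma>)"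
    unfolding g_def by (rule sum.inter_filter[OF fin, symmetric])
  also have "{\<sigma>\<in>?T. \<sigma> (2*m) = 2*m \<and> \<sigma> (Suc (2*m)) = Suc (2*m)} = ?T'"
    by (rule set_eqI) (simp add: perm_fix_iff[symmetric])
  also have "(\<Sum>\<sigma>\<in>?T'. wt \<omega> (Suc m) u \<sigma>) = (\<Sum>\<sigma>\<in>?T'. \<omega> (u (2*m)) (u (Suc (2*m))) * wt \<omega> m u \<sigma>)"
  proof (intro sum.cong refl)
    fix \<sigma> assume "\<sigma> \<in> ?T'"
    then have "\<sigma> (2*m) = 2*m" "\<sigma> (Suc (2*m)) = Suc (2*m)" using perm_fix_iff[of \<sigma> m] by simp_all
    then show "wt \<omega> (Suc m) u \<sigma> = \<omega> (u (2*m)) (u (Suc (2*m))) * wt \<omega> m u \<sigma>"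
      unfolding wt_def by simp
  qed
  finally have e2: "(\<Sum>\<sigma>\<in>?T. g \<sigma>) = \<omega> (u (2*m)) (u (Suc (2*m))) * (\<Sum>\<sigma>\<in>?T'. wt \<omega> m u \<sigma>)"
    by (simp add: sum_distrib_left)
  show ?thesis unfolding wedge_pow_wt e1 e2 by (simp add: field_simps)
qed




lemma nn_basic:
  assumes nn: "nonneg_11_form I \<alpha>" and lI: "linear I" and II: "\<forall>x. I (I x) = - x"
  shows "bilinear \<alpha>" "\<And>x y. \<alpha> y x = - \<alpha> x y" "\<And>x y. \<alpha> (I x) (I y) = \<alpha> x y"
    "\<And>x. \<alpha> x x = 0" "\<And>x y. \<alpha> y (I x) = \<alpha> x (I y)" "\<And>x. \<alpha> x (I x) \<ge> 0"
proof -
  show bl: "bilinear \<alpha>" using nn unfolding nonneg_11_form_def real_11_form_def two_form_def by blast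
  show an: "\<And>x y. \<alpha> y x = - \<alpha> x y" using nn unfolding nonneg_11_form_def real_11_form_def two_form_def by blast
  show inv: "\<And>x y. \<alpha> (I x) (I y) = \<alpha> x y" using nn unfolding nonneg_11_form_def real_11_form_def by blast
  show "\<And>x. \<alpha> x (I x) \<ge> 0" using nn unfolding nonneg_11_form_def by blast
  show "\<And>x. \<alpha> x x = 0" using an by (metis add.inverse_unique add_eq_0_iff2 equal_neg_zero)
  fix x y
  have "\<alpha> y (I x) = - \<alpha> (I x) y" by (rule an)
  also have "\<alpha> (I x) y = \<alpha> (I (I x)) (I y)" by (rule inv[symmetric])
  also have "\<dots> = - \<alpha> x (I y)" using II bilinear_lneg[OF bl] by simp
  finally show "\<alpha> y (I x) = \<alpha> x (I y)" by simp
qed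

definition proj :: "('v::real_vector \<Rightarrow> 'v) \<Rightarrow> ('v \<Rightarrow> 'v \<Rightarrow> real) \<Rightarrow> 'v \<Rightarrow> 'v \<Rightarrow> 'v" where
  "proj I \<alpha> x0 y = y - (\<alpha> y (I x0) / \<alpha> x0 (I x0)) *\<^sub>R x0 + (\<alpha> y x0 / \<alpha> x0 (I x0)) *\<^sub>R I x0"

context
  fixes I :: "'v::real_vector \<Rightarrow> 'v" and \<alpha> :: "'v \<Rightarrow> 'v \<Rightarrow> real" and x0 :: 'v
  assumes nn: "nonneg_11_form I \<alpha>" and lI: "linear I" and II: "\<forall>x. I (I x) = - x"
begin

lemma bl: "bilinear \<alpha>" by (rule nn_basic(1)[OF nn lI II])
lemma an: "\<And>x y. \<alpha> y x = - \<alpha> x y" by (rule nn_basic(2)[OF nn lI II])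
lemma inv: "\<And>x y. \<alpha> (I x) (I y) = \<alpha> x y" by (rule nn_basic(3)[OF nn lI II])
lemma al0: "\<And>x. \<alpha> x x = 0" by (rule nn_basic(4)[OF nn lI II])
lemma hsym: "\<And>x y. \<alpha> y (I x) = \<alpha> x (I y)" by (rule nn_basic(5)[OF nn lI II])
lemma pos: "\<And>x. \<alpha> x (I x) \<ge> 0" by (rule nn_basic(6)[OF nn lI II])

lemmas bsimps = bilinear_ladd[OF bl] bilinear_radd[OF bl] bilinear_lmul[OF bl] bilinear_rmul[OF bl]
  bilinear_lsub[OF bl] bilinear_rsub[OF bl] bilinear_lneg[OF bl] bilinear_rneg[OF bl]
  linear_add[OF lI] linear_diff[OF lI] linear_cmul[OF lI] linear_neg[OF lI]

lemma Ix_x: "\<alpha> (I x) x = - \<alpha> x (I x)"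
  by (rule an)

lemma proj_I: "proj I \<alpha> x0 (I y) = I (proj I \<alpha> x0 y)"
proof -
  have "\<alpha> (I y) x0 = - \<alpha> y (I x0)"
  proof -
    have "\<alpha> (I y) x0 = \<alpha> (I (I y)) (I x0)" by (rule inv[symmetric])
    also have "\<dots> = - \<alpha> y (I x0)" using II by (simp add: bsimps)
    finally show ?thesis .
  qed
  then show ?thesis unfolding proj_def using II by (simp add: bsimps inv algebra_simps)
qed

lemma proj_lin: "linear (proj I \<alpha> x0)"
  by (rule linearI) (simp_all add: proj_def bsimps algebra_simps add_divide_distrib)

lemma proj_form: "proj I \<alpha> x0 y = y + (- (\<alpha> y (I x0) / \<alpha> x0 (I x0))) *\<^sub>R x0 + (\<alpha> y x0 / \<alpha> x0 (I x0)) *\<^sub>R I x0"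
  unfolding proj_def by simp

lemma proj_orth:
  assumes a: "\<alpha> x0 (I x0) > 0"
  shows "\<alpha> x0 (proj I \<alpha> x0 y) = 0" "\<alpha> (I x0) (proj I \<alpha> x0 y) = 0"
proof -
  have e1: "\<alpha> x0 (I y) = \<alpha> y (I x0)" by (rule hsym)
  have e2: "\<alpha> (I x0) x0 = - \<alpha> x0 (I x0)" by (rule an)
  have e3: "\<alpha> (I x0) (I x0) = 0" "\<alpha> x0 x0 = 0" using al0 by auto
  show "\<alpha> x0 (proj I \<alpha> x0 y) = 0" unfolding proj_def using a e3
    by (simp add: bsimps an[of x0 y])
  show "\<alpha> (I x0) (proj I \<alpha> x0 y) = 0" unfolding proj_def using a e1 e2 e3
    by (simp add: bsimps an[of "I x0" y])
qed

lemma proj_nonneg: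
  assumes a: "\<alpha> x0 (I x0) > 0"
  shows "\<alpha> (proj I \<alpha> x0 x) (I (proj I \<alpha> x0 x)) = \<alpha> x (I x) - ((\<alpha> x (I x0))\<^sup>2 + (\<alpha> x x0)\<^sup>2) / \<alpha> x0 (I x0)"
proof -
  define A where "A = \<alpha> x0 (I x0)"
  define s1 where "s1 = \<alpha> x (I x0)"
  define s2 where "s2 = \<alpha> x x0"
  have f1: "\<alpha> x0 (I x) = s1" unfolding s1_def by (rule hsym)
  have f2: "\<alpha> x0 x = - s2" unfolding s2_def by (rule an)
  have f3: "\<alpha> (I x0) (I x) = - s2" using inv[of x0 x] f2 by simp
  have f4: "\<alpha> (I x0) x0 = - A" unfolding A_def by (rule an)
  have f5: "\<alpha> (I x0) (I x0) = 0" "\<alpha> x0 x0 = 0" using al0 by auto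
  have p: "proj I \<alpha> x0 x = x - (s1 / A) *\<^sub>R x0 + (s2 / A) *\<^sub>R I x0"
    unfolding proj_def s1_def s2_def A_def ..
  have Ip: "I (proj I \<alpha> x0 x) = I x - (s1 / A) *\<^sub>R I x0 - (s2 / A) *\<^sub>R x0"
    unfolding p using II by (simp add: bsimps)
  have "\<alpha> (proj I \<alpha> x0 x) (I (proj I \<alpha> x0 x)) = \<alpha> x (I x) - 2 * (s1/A) * s1 - 2 * (s2/A) * s2 + (s1/A)^2 * A + (s2/A)^2 * A"
    unfolding Ip unfolding p
    by (simp add: bsimps f1 f2 f3 f4 f5 s1_def[symmetric] s2_def[symmetric] A_def[symmetric] power2_eq_square algebra_simps)
  also have "\<dots> = \<alpha> x (I x) - (s1\<^sup>2 + s2\<^sup>2) / A"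
    using a unfolding A_def by (simp add: field_simps power2_eq_square)
  finally show ?thesis unfolding s1_def s2_def A_def .
qed

end




lemma bil_comb: "bilinear \<alpha> \<Longrightarrow> bilinear \<beta> \<Longrightarrow> bilinear (\<lambda>x y. \<alpha> x y + \<beta> x y)"
  unfolding bilinear_def by (auto intro: module_hom_add)

lemma bil_diff: "bilinear \<alpha> \<Longrightarrow> bilinear \<beta> \<Longrightarrow> bilinear (\<lambda>x y. \<alpha> x y - \<beta> x y)"
  unfolding bilinear_def by (auto intro: module_hom_sub)

lemma bil_pull: "bilinear \<alpha> \<Longrightarrow> linear p \<Longrightarrow> bilinear (\<lambda>x y. \<alpha> (p x) (p y))"
  unfolding bilinear_def
proof (intro conjI allI)
  fix x y assume "(\<forall>x. linear (\<alpha> x)) \<and> (\<forall>y. linear (\<lambda>x. \<alpha> x y))" "linear p"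
  then show "linear (\<lambda>y. \<alpha> (p x) (p y))" "linear (\<lambda>x. \<alpha> (p x) (p y))"
    using linear_compose[of p "\<alpha> (p x)"] linear_compose[of p "\<lambda>x. \<alpha> x (p y)"] by (auto simp: o_def)
qed

lemma r11_bil: "real_11_form I \<alpha> \<Longrightarrow> bilinear \<alpha>"
  unfolding real_11_form_def two_form_def by (iprover elim: conjE)
lemma r11_an: "real_11_form I \<alpha> \<Longrightarrow> \<alpha> y x = - \<alpha> x y"
  unfolding real_11_form_def two_form_def by (iprover elim: conjE allE)
lemma r11_inv: "real_11_form I \<alpha> \<Longrightarrow> \<alpha> (I x) (I y) = \<alpha> x y"
  unfolding real_11_form_def two_form_def by (iprover elim: conjE allE)
lemma r11_intro: "bilinear \<alpha> \<Longrightarrow> (\<And>x y. \<alpha> y x = - \<alpha> x y) \<Longrightarrow> (\<And>x y. \<alpha> (I x) (I y) = \<alpha> x y) \<Longrightarrow> real_11_form I \<alpha>"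
  unfolding real_11_form_def two_form_def by (iprover intro: conjI allI)

lemma r11_add:
  assumes a: "real_11_form I \<alpha>" and b: "real_11_form I \<beta>"
  shows "real_11_form I (\<lambda>x y. \<alpha> x y + \<beta> x y)"
proof (rule r11_intro)
  show "bilinear (\<lambda>x y. \<alpha> x y + \<beta> x y)" by (rule bil_comb[OF r11_bil[OF a] r11_bil[OF b]])
  fix x y
  show "\<alpha> y x + \<beta> y x = - (\<alpha> x y + \<beta> x y)" using r11_an[OF a, of y x] r11_an[OF b, of y x] by simp
  show "\<alpha> (I x) (I y) + \<beta> (I x) (I y) = \<alpha> x y + \<beta> x y" using r11_inv[OF a, of x y] r11_inv[OF b, of x y] by simp
qed

lemma r11_diff:
  assumes a: "real_11_form I \<alpha>" and b: "real_11_form I \<beta>"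
  shows "real_11_form I (\<lambda>x y. \<alpha> x y - \<beta> x y)"
proof (rule r11_intro)
  show "bilinear (\<lambda>x y. \<alpha> x y - \<beta> x y)" by (rule bil_diff[OF r11_bil[OF a] r11_bil[OF b]])
  fix x y
  show "\<alpha> y x - \<beta> y x = - (\<alpha> x y - \<beta> x y)" using r11_an[OF a, of y x] r11_an[OF b, of y x] by simp
  show "\<alpha> (I x) (I y) - \<beta> (I x) (I y) = \<alpha> x y - \<beta> x y" using r11_inv[OF a, of x y] r11_inv[OF b, of x y] by simp
qed

lemma r11_pull:
  assumes a: "real_11_form I \<alpha>" and p: "linear p" and pI: "\<forall>y. p (I y) = I (p y)"
  shows "real_11_form I (\<lambda>x y. \<alpha> (p x) (p y))"
proof (rule r11_intro)
  show "bilinear (\<lambda>x y. \<alpha> (p x) (p y))" by (rule bil_pull[OF r11_bil[OF a] p])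
  fix x y
  show "\<alpha> (p y) (p x) = - \<alpha> (p x) (p y)" by (rule r11_an[OF a])
  show "\<alpha> (p (I x)) (p (I y)) = \<alpha> (p x) (p y)" using r11_inv[OF a, of "p x" "p y"] pI by simp
qed

lemma nn_add:
  assumes a: "nonneg_11_form I \<alpha>" and b: "nonneg_11_form I \<beta>"
  shows "nonneg_11_form I (\<lambda>x y. \<alpha> x y + \<beta> x y)"
  unfolding nonneg_11_form_def
proof (intro conjI allI)
  show "real_11_form I (\<lambda>x y. \<alpha> x y + \<beta> x y)"
    using a b unfolding nonneg_11_form_def by (blast intro: r11_add)
  fix x
  have "0 \<le> \<alpha> x (I x)" "0 \<le> \<beta> x (I x)" using a b unfolding nonneg_11_form_def by blast+
  then show "0 \<le> \<alpha> x (I x) + \<beta> x (I x)" by simp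
qed

lemma nn_pull:
  assumes a: "nonneg_11_form I \<alpha>" and p: "linear p" and pI: "\<forall>y. p (I y) = I (p y)"
  shows "nonneg_11_form I (\<lambda>x y. \<alpha> (p x) (p y))"
  unfolding nonneg_11_form_def
proof (intro conjI allI)
  show "real_11_form I (\<lambda>x y. \<alpha> (p x) (p y))"
    using a unfolding nonneg_11_form_def using r11_pull[OF _ p pI] by blast
  fix x
  have "0 \<le> \<alpha> (p x) (I (p x))" using a unfolding nonneg_11_form_def by blast
  then show "0 \<le> \<alpha> (p x) (p (I x))" using pI by simp
qed

lemma frame_comp: "(\<forall>y. p (I y) = I (p y)) \<Longrightarrow> complex_frame I (p \<circ> w) = (\<lambda>k. p (complex_frame I w k))"
  unfolding complex_frame_def by auto

lemma wedge_pull: "(\<forall>y. p (I y) = I (p y)) \<Longrightarrow>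
   wedge_pow (\<lambda>x y. \<alpha> (p x) (p y)) m (complex_frame I w) = wedge_pow \<alpha> m (complex_frame I (p \<circ> w))"
  unfolding wedge_pow_def by (simp add: frame_comp)

lemma frame_last: "complex_frame I w (2*m) = w m" "complex_frame I w (Suc (2*m)) = I (w m)"
  unfolding complex_frame_def by auto

lemma frame_upd_low: "j < 2*m \<Longrightarrow> complex_frame I (w(m := x0)) j = complex_frame I w j"
  unfolding complex_frame_def by auto

lemma wedge_fcp:
  assumes bl: "bilinear \<omega>" and pI: "\<forall>y. p (I y) = I (p y)"
    and pf: "\<forall>y. p y = y + c y *\<^sub>R x0 + d y *\<^sub>R I x0"
  shows "wedge_pow \<omega> (Suc m) (complex_frame I ((p \<circ> w)(m := x0))) = wedge_pow \<omega> (Suc m) (complex_frame I (w(m := x0)))"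
proof -
  define F where "F = complex_frame I (w(m := x0))"
  have F2: "F (2*m) = x0" "F (Suc (2*m)) = I x0" unfolding F_def frame_last by simp_all
  have "wedge_pow \<omega> (Suc m) (complex_frame I ((p \<circ> w)(m := x0)))
     = wedge_pow \<omega> (Suc m) (\<lambda>j. if j \<in> {..<2*m} then F j + c (F j) *\<^sub>R F (2*m) + d (F j) *\<^sub>R F (Suc (2*m)) else F j)"
  proof (rule wedge_local)
    fix j assume j: "j < 2 * Suc m"
    show "complex_frame I ((p \<circ> w)(m := x0)) j = (if j \<in> {..<2*m} then F j + c (F j) *\<^sub>R F (2*m) + d (F j) *\<^sub>R F (Suc (2*m)) else F j)"
    proof (cases "j < 2*m")
      case True
      then have "complex_frame I ((p \<circ> w)(m := x0)) j = p (F j)"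
        unfolding F_def using frame_upd_low[OF True, of I "p \<circ> w" x0] frame_upd_low[OF True, of I w x0] frame_comp[OF pI, of w] by simp
      then show ?thesis using True F2 pf by simp
    next
      case False
      then have "j = 2*m \<or> j = Suc (2*m)" using j by auto
      then show ?thesis using False unfolding F_def complex_frame_def by auto
    qed
  qed
  also have "\<dots> = wedge_pow \<omega> (Suc m) F" by (rule wedge_fc[OF bl]) auto
  finally show ?thesis unfolding F_def .
qed




lemma cs0:
  assumes nn: "nonneg_11_form I \<alpha>" and lI: "linear I" and II: "\<forall>x. I (I x) = - x"
    and a0: "\<alpha> x0 (I x0) = 0"
  shows "\<alpha> x0 y = 0" "\<alpha> (I x0) y = 0"
proof -
  have bl: "bilinear \<alpha>" by (rule nn_basic(1)[OF nn lI II])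
  note bs = bilinear_ladd[OF bl] bilinear_radd[OF bl] bilinear_lmul[OF bl] bilinear_rmul[OF bl]
    linear_add[OF lI] linear_cmul[OF lI]
  have c0: "\<alpha> x0 (I z) = 0" for z
  proof (rule ccontr)
    define c where "c = \<alpha> x0 (I z)"
    define d where "d = \<alpha> z (I z)"
    assume "\<alpha> x0 (I z) \<noteq> 0"
    then have cn: "c \<noteq> 0" unfolding c_def .
    have d0: "d \<ge> 0" unfolding d_def by (rule nn_basic(6)[OF nn lI II])
    have hs: "\<alpha> z (I x0) = c" unfolding c_def by (rule nn_basic(5)[OF nn lI II])
    define t where "t = - c / (d + 1)"
    have "0 \<le> \<alpha> (x0 + t *\<^sub>R z) (I (x0 + t *\<^sub>R z))" by (rule nn_basic(6)[OF nn lI II])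
    also have "\<alpha> (x0 + t *\<^sub>R z) (I (x0 + t *\<^sub>R z)) = 2 * t * c + t^2 * d"
      using a0 hs by (simp add: bs c_def[symmetric] d_def[symmetric] power2_eq_square algebra_simps)
    also have "\<dots> = t * c - t^2"
    proof -
      have dp: "d + 1 \<noteq> 0" using d0 by simp
      have td: "t * d = - c - t" unfolding t_def using dp by (simp add: field_simps)
      have "t^2 * d = t * (t * d)" by (simp add: power2_eq_square)
      also have "\<dots> = t * (- c - t)" using td by simp
      also have "\<dots> = - (t * c) - t^2" by (simp add: power2_eq_square algebra_simps)
      finally show ?thesis by linarith
    qed
    finally have le: "0 \<le> t * c - t^2" .
    have "t * c = - (c^2 / (d + 1))" unfolding t_def by (simp add: power2_eq_square)
    moreover have "c^2 / (d + 1) > 0" using cn d0 by (simp add: divide_pos_pos)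
    moreover have "t^2 \<ge> 0" by simp
    ultimately show False using le by linarith
  qed
  have "\<alpha> x0 (I (- I y)) = 0" by (rule c0)
  moreover have "I (- I y) = y" using II by (simp add: linear_neg[OF lI])
  ultimately show "\<alpha> x0 y = 0" by simp
  have "\<alpha> (I x0) y = - \<alpha> y (I x0)" by (rule nn_basic(2)[OF nn lI II])
  also have "\<alpha> y (I x0) = \<alpha> x0 (I y)" by (rule nn_basic(5)[OF nn lI II])
  finally show "\<alpha> (I x0) y = 0" using c0 by simp
qed

lemma wedge_zero:
  assumes nn: "nonneg_11_form I \<alpha>" and lI: "linear I" and II: "\<forall>x. I (I x) = - x"
    and a0: "\<alpha> (v m) (I (v m)) = 0"
  shows "wedge_pow \<alpha> (Suc m) (complex_frame I v) = 0"
proof -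
  have anti: "\<forall>x y. \<alpha> y x = - \<alpha> x y" using nn_basic(2)[OF nn lI II] by blast
  have orth: "\<forall>j<2*m. \<alpha> (complex_frame I v (2*m)) (complex_frame I v j) = 0 \<and>
      \<alpha> (complex_frame I v (Suc (2*m))) (complex_frame I v j) = 0"
    unfolding frame_last using cs0[OF nn lI II a0] by blast
  show ?thesis using wedge_fa[OF anti orth] a0 unfolding frame_last by simp
qed

lemma wedge_R:
  assumes nn: "nonneg_11_form I \<alpha>" and lI: "linear I" and II: "\<forall>x. I (I x) = - x"
    and a: "\<alpha> x0 (I x0) > 0"
  shows "wedge_pow \<alpha> (Suc m) (complex_frame I (w(m := x0)))
       = real (Suc m) * \<alpha> x0 (I x0) * wedge_pow \<alpha> m (complex_frame I (proj I \<alpha> x0 \<circ> w))"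
proof -
  let ?p = "proj I \<alpha> x0"
  have bl: "bilinear \<alpha>" by (rule nn_basic(1)[OF nn lI II])
  have anti: "\<forall>x y. \<alpha> y x = - \<alpha> x y" using nn_basic(2)[OF nn lI II] by blast
  have pI: "\<forall>y. ?p (I y) = I (?p y)" using proj_I[OF nn lI II] by blast
  have pf: "\<forall>y. ?p y = y + (- (\<alpha> y (I x0) / \<alpha> x0 (I x0))) *\<^sub>R x0 + (\<alpha> y x0 / \<alpha> x0 (I x0)) *\<^sub>R I x0"
    using proj_form[OF nn lI II] by blast
  let ?u = "complex_frame I ((?p \<circ> w)(m := x0))"
  have "wedge_pow \<alpha> (Suc m) (complex_frame I (w(m := x0))) = wedge_pow \<alpha> (Suc m) ?u"
    using wedge_fcp[OF bl pI pf] by simp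
  also have "\<dots> = real (Suc m) * \<alpha> (?u (2*m)) (?u (Suc (2*m))) * wedge_pow \<alpha> m ?u"
  proof (rule wedge_fa[OF anti])
    show "\<forall>j<2*m. \<alpha> (?u (2*m)) (?u j) = 0 \<and> \<alpha> (?u (Suc (2*m))) (?u j) = 0"
    proof (intro allI impI)
      fix j assume j: "j < 2*m"
      have "?u j = ?p (complex_frame I w j)"
        using frame_upd_low[OF j, of I "?p \<circ> w" x0] frame_comp[OF pI, of w] by simp
      then show "\<alpha> (?u (2*m)) (?u j) = 0 \<and> \<alpha> (?u (Suc (2*m))) (?u j) = 0"
        unfolding frame_last using proj_orth[OF nn lI II a] by simp
    qed
  qed
  also have "wedge_pow \<alpha> m ?u = wedge_pow \<alpha> m (complex_frame I (?p \<circ> w))"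
    by (rule wedge_local) (simp add: frame_upd_low)
  finally have h: "wedge_pow \<alpha> (Suc m) (complex_frame I (w(m := x0))) = real (Suc m) * \<alpha> (?u (2*m)) (?u (Suc (2*m))) * wedge_pow \<alpha> m (complex_frame I (?p \<circ> w))" .
  have "?u (2*m) = x0" "?u (Suc (2*m)) = I x0" unfolding frame_last by simp_all
  then show ?thesis using h by (simp only:)
qed

lemma wedge0: "wedge_pow \<omega> 0 u = 1"
  unfolding wedge_pow_def by simp




lemma nn_rest:
  assumes na: "nonneg_11_form I \<alpha>" and ng: "nonneg_11_form I \<gamma>" and lI: "linear I" and II: "\<forall>x. I (I x) = - x"
    and a: "\<alpha> x0 (I x0) > 0"
  shows "nonneg_11_form I (\<lambda>x y. (\<alpha> x y + \<gamma> x y) - \<alpha> (proj I \<alpha> x0 x) (proj I \<alpha> x0 y))"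
  unfolding nonneg_11_form_def
proof (intro conjI allI)
  have pI: "\<forall>y. proj I \<alpha> x0 (I y) = I (proj I \<alpha> x0 y)" using proj_I[OF na lI II] by blast
  have r: "real_11_form I \<alpha>" "real_11_form I \<gamma>" using na ng unfolding nonneg_11_form_def by blast+
  show "real_11_form I (\<lambda>x y. (\<alpha> x y + \<gamma> x y) - \<alpha> (proj I \<alpha> x0 x) (proj I \<alpha> x0 y))"
    by (rule r11_diff[OF r11_add[OF r] r11_pull[OF r(1) proj_lin[OF na lI II] pI]])
  fix x
  have "0 \<le> \<gamma> x (I x)" using ng unfolding nonneg_11_form_def by blast
  moreover have "\<alpha> (proj I \<alpha> x0 x) (proj I \<alpha> x0 (I x)) = \<alpha> x (I x) - ((\<alpha> x (I x0))\<^sup>2 + (\<alpha> x x0)\<^sup>2) / \<alpha> x0 (I x0)"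
    using proj_nonneg[OF na lI II a, of x] pI by simp
  moreover have "((\<alpha> x (I x0))\<^sup>2 + (\<alpha> x x0)\<^sup>2) / \<alpha> x0 (I x0) \<ge> 0" using a by simp
  ultimately show "0 \<le> \<alpha> x (I x) + \<gamma> x (I x) - \<alpha> (proj I \<alpha> x0 x) (proj I \<alpha> x0 (I x))" by linarith
qed

lemma main_ind:
  fixes I :: "'a::real_vector \<Rightarrow> 'a"
  assumes lI: "linear I" and II: "\<forall>x. I (I x) = - x"
  shows "\<forall>\<alpha> \<gamma> v. nonneg_11_form I \<alpha> \<longrightarrow> nonneg_11_form I \<gamma> \<longrightarrow>
    0 \<le> wedge_pow \<alpha> m (complex_frame I v) \<and>
    wedge_pow \<alpha> m (complex_frame I v) \<le> wedge_pow (\<lambda>x y. \<alpha> x y + \<gamma> x y) m (complex_frame I v)"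
proof (induction m)
  case 0
  show ?case by (simp add: wedge0)
next
  case (Suc m)
  note IH = Suc.IH
  show ?case
  proof (intro allI impI conjI)
    fix \<alpha> \<gamma> :: "'a \<Rightarrow> 'a \<Rightarrow> real" and v :: "nat \<Rightarrow> 'a"
    assume na: "nonneg_11_form I \<alpha>" and ng: "nonneg_11_form I \<gamma>"
    define \<sigma> where "\<sigma> = (\<lambda>x y. \<alpha> x y + \<gamma> x y)"
    have ns: "nonneg_11_form I \<sigma>" unfolding \<sigma>_def by (rule nn_add[OF na ng])
    define x0 where "x0 = v m"
    have vv: "v(m := x0) = v" by (simp add: x0_def)
    define a where "a = \<alpha> x0 (I x0)"
    define s where "s = \<sigma> x0 (I x0)"
    have a0: "a \<ge> 0" unfolding a_def by (rule nn_basic(6)[OF na lI II])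
    have b0: "\<gamma> x0 (I x0) \<ge> 0" by (rule nn_basic(6)[OF ng lI II])
    have sa: "s = a + \<gamma> x0 (I x0)" unfolding s_def a_def \<sigma>_def by simp
    have R: "wedge_pow \<omega> (Suc m) (complex_frame I v)
         = real (Suc m) * \<omega> x0 (I x0) * wedge_pow \<omega> m (complex_frame I (proj I \<omega> x0 \<circ> v))"
      if "nonneg_11_form I \<omega>" "\<omega> x0 (I x0) > 0" for \<omega>
      using wedge_R[OF that(1) lI II that(2), of m v] vv by simp
    have Z: "wedge_pow \<omega> (Suc m) (complex_frame I v) = 0"
      if "nonneg_11_form I \<omega>" "\<omega> x0 (I x0) = 0" for \<omega>
      using wedge_zero[OF that(1) lI II, of v m] that(2) unfolding x0_def by simp
    have pos: "0 \<le> wedge_pow \<omega> (Suc m) (complex_frame I v)" if nw: "nonneg_11_form I \<omega>" for \<omega>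
    proof (cases "\<omega> x0 (I x0) = 0")
      case True
      then show ?thesis using Z[OF nw] by simp
    next
      case False
      then have p: "\<omega> x0 (I x0) > 0" using nn_basic(6)[OF nw lI II, of x0] by simp
      have "0 \<le> wedge_pow \<omega> m (complex_frame I (proj I \<omega> x0 \<circ> v))" using IH nw by blast
      then show ?thesis unfolding R[OF nw p] using p by simp
    qed
    show "0 \<le> wedge_pow \<alpha> (Suc m) (complex_frame I v)" by (rule pos[OF na])
    show "wedge_pow \<alpha> (Suc m) (complex_frame I v) \<le> wedge_pow (\<lambda>x y. \<alpha> x y + \<gamma> x y) (Suc m) (complex_frame I v)"
    proof (cases "a = 0")
      case True
      then show ?thesis using Z[OF na] pos[OF ns] unfolding a_def by (simp add: \<sigma>_def)
    next
      case False
      then have ap: "a > 0" using a0 by simp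
      then have sp: "s > 0" using sa b0 by simp
      define q where "q = proj I \<sigma> x0"
      define p where "p = proj I \<alpha> x0"
      have hs: "wedge_pow \<sigma> (Suc m) (complex_frame I v) = real (Suc m) * s * wedge_pow \<sigma> m (complex_frame I (q \<circ> v))"
        unfolding s_def q_def using R[OF ns] sp unfolding s_def by simp
      have qI: "\<forall>y. q (I y) = I (q y)" unfolding q_def using proj_I[OF ns lI II] by blast
      have qf: "\<forall>y. q y = y + (- (\<sigma> y (I x0) / \<sigma> x0 (I x0))) *\<^sub>R x0 + (\<sigma> y x0 / \<sigma> x0 (I x0)) *\<^sub>R I x0"
        unfolding q_def using proj_form[OF ns lI II] by blast
      have pI: "\<forall>y. p (I y) = I (p y)" unfolding p_def using proj_I[OF na lI II] by blast
      have "wedge_pow \<alpha> (Suc m) (complex_frame I v) = wedge_pow \<alpha> (Suc m) (complex_frame I ((q \<circ> v)(m := x0)))"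
        using wedge_fcp[OF nn_basic(1)[OF na lI II] qI qf, of m v] vv by simp
      also have "\<dots> = real (Suc m) * a * wedge_pow \<alpha> m (complex_frame I (p \<circ> (q \<circ> v)))"
        unfolding a_def p_def by (rule wedge_R[OF na lI II ap[unfolded a_def]])
      also have "wedge_pow \<alpha> m (complex_frame I (p \<circ> (q \<circ> v))) = wedge_pow (\<lambda>x y. \<alpha> (p x) (p y)) m (complex_frame I (q \<circ> v))"
        by (rule wedge_pull[OF pI, symmetric])
      finally have ha: "wedge_pow \<alpha> (Suc m) (complex_frame I v) = real (Suc m) * a * wedge_pow (\<lambda>x y. \<alpha> (p x) (p y)) m (complex_frame I (q \<circ> v))" .
      have n1: "nonneg_11_form I (\<lambda>x y. \<alpha> (p x) (p y))"
        unfolding p_def by (rule nn_pull[OF na proj_lin[OF na lI II] pI[unfolded p_def]])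
      have n2: "nonneg_11_form I (\<lambda>x y. \<sigma> x y - \<alpha> (p x) (p y))"
        unfolding p_def \<sigma>_def by (rule nn_rest[OF na ng lI II ap[unfolded a_def]])
      have e: "(\<lambda>x y. \<alpha> (p x) (p y) + (\<sigma> x y - \<alpha> (p x) (p y))) = \<sigma>" by simp
      have ih: "0 \<le> wedge_pow (\<lambda>x y. \<alpha> (p x) (p y)) m (complex_frame I (q \<circ> v)) \<and>
          wedge_pow (\<lambda>x y. \<alpha> (p x) (p y)) m (complex_frame I (q \<circ> v)) \<le> wedge_pow \<sigma> m (complex_frame I (q \<circ> v))"
      proof -
        have ih0: "0 \<le> wedge_pow (\<lambda>x y. \<alpha> (p x) (p y)) m (complex_frame I (q \<circ> v)) \<and>
          wedge_pow (\<lambda>x y. \<alpha> (p x) (p y)) m (complex_frame I (q \<circ> v)) \<le>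
          wedge_pow (\<lambda>x y. \<alpha> (p x) (p y) + (\<sigma> x y - \<alpha> (p x) (p y))) m (complex_frame I (q \<circ> v))"
          using IH[rule_format, OF n1 n2, of "q \<circ> v"] by simp
        have "wedge_pow (\<lambda>x y. \<alpha> (p x) (p y) + (\<sigma> x y - \<alpha> (p x) (p y))) m (complex_frame I (q \<circ> v))
          = wedge_pow \<sigma> m (complex_frame I (q \<circ> v))" by simp
        then show ?thesis using ih0 by simp
      qed
      have "real (Suc m) * a * wedge_pow (\<lambda>x y. \<alpha> (p x) (p y)) m (complex_frame I (q \<circ> v))
          \<le> real (Suc m) * s * wedge_pow \<sigma> m (complex_frame I (q \<circ> v))"
        using ih ap sa b0 by (intro mult_mono) auto
      then show ?thesis using ha hs by (simp add: \<sigma>_def)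
    qed
  qed
qed




lemma nn_J:
  assumes na: "nonneg_11_form I \<alpha>" and lI: "linear I" and II: "\<forall>x. I (I x) = - x"
    and lJ: "linear J" and JI: "\<forall>x. J (I x) = - I (J x)"
  shows "nonneg_11_form I (\<lambda>x y. - \<alpha> (J x) (J y))"
  unfolding nonneg_11_form_def
proof (intro conjI allI)
  have bl: "bilinear \<alpha>" by (rule nn_basic(1)[OF na lI II])
  have r: "real_11_form I \<alpha>" using na unfolding nonneg_11_form_def by blast
  show "real_11_form I (\<lambda>x y. - \<alpha> (J x) (J y))"
  proof (rule r11_intro)
    have b1: "bilinear (\<lambda>x y. \<alpha> (J x) (J y))" by (rule bil_pull[OF bl lJ])
    then show "bilinear (\<lambda>x y. - \<alpha> (J x) (J y))" unfolding bilinear_def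
      by (auto intro: module_hom_neg)
    fix x y
    show "- \<alpha> (J y) (J x) = - (- \<alpha> (J x) (J y))" using r11_an[OF r, of "J y" "J x"] by simp
    have "\<alpha> (J (I x)) (J (I y)) = \<alpha> (- I (J x)) (- I (J y))" using JI by simp
    also have "\<dots> = \<alpha> (I (J x)) (I (J y))" by (simp add: bilinear_lneg[OF bl] bilinear_rneg[OF bl])
    also have "\<dots> = \<alpha> (J x) (J y)" by (rule r11_inv[OF r])
    finally show "- \<alpha> (J (I x)) (J (I y)) = - \<alpha> (J x) (J y)" by simp
  qed
  fix x
  have "0 \<le> \<alpha> (J x) (I (J x))" by (rule nn_basic(6)[OF na lI II])
  then show "0 \<le> - \<alpha> (J x) (J (I x))" using JI by (simp add: bilinear_rneg[OF bl])
qed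

theorem lemma3p1:
  fixes I J K :: "'v::euclidean_space \<Rightarrow> 'v"
    and \<alpha> :: "'v \<Rightarrow> 'v \<Rightarrow> real"
    and n :: nat
  assumes "hypercomplex_structure I J K"
    and "DIM('v) = 4 * n"
    and "nonneg_11_form I \<alpha>"
  shows "top_form_ge I (wedge_pow (\<lambda>x y. \<alpha> x y - \<alpha> (J x) (J y)) (2 * n)) (wedge_pow \<alpha> (2 * n))"
proof -
  have lI: "linear I" and lJ: "linear J" and lK: "linear K" and II: "\<forall>x. I (I x) = - x"
    and JJ: "\<forall>x. J (J x) = - x" and KK: "\<forall>x. K (K x) = - x" and KJI: "\<forall>x. K (J (I x)) = - x"
    using assms(1) unfolding hypercomplex_structure_def by blast+
  have JIK: "J (I x) = K x" for x
  proof -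
    have "K (K (J (I x))) = - J (I x)" using KK by blast
    moreover have "K (K (J (I x))) = - K x" using KJI linear_neg[OF lK] by simp
    ultimately show ?thesis by simp
  qed
  have IJI: "I (J (I x)) = J x" for x
  proof -
    have "J (I (J (I x))) = - x" using KK JIK by simp
    then have "J (J (I (J (I x)))) = - J x" using linear_neg[OF lJ] by simp
    then show ?thesis using JJ by simp
  qed
  have JI: "\<forall>x. J (I x) = - I (J x)"
  proof
    fix y
    have "I (J (I (I y))) = J (I y)" by (rule IJI)
    then show "J (I y) = - I (J y)" using II linear_neg[OF lI] linear_neg[OF lJ] by simp
  qed
  have ng: "nonneg_11_form I (\<lambda>x y. - \<alpha> (J x) (J y))" by (rule nn_J[OF assms(3) lI II lJ JI])
  show ?thesis unfolding top_form_ge_def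
  proof
    fix v
    have "wedge_pow \<alpha> (2*n) (complex_frame I v) \<le> wedge_pow (\<lambda>x y. \<alpha> x y + - \<alpha> (J x) (J y)) (2*n) (complex_frame I v)"
      using main_ind[OF lI II, rule_format, OF assms(3) ng] by blast
    then show "0 \<le> wedge_pow (\<lambda>x y. \<alpha> x y - \<alpha> (J x) (J y)) (2 * n) (complex_frame I v) - wedge_pow \<alpha> (2 * n) (complex_frame I v)"
      by simp
  qed
qed


end
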